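(* Fix $n$, $m$, a scoring vector $s$ and a distribution $\Psi$ over preference profiles, and suppose there is a function $u$ such that for every vector $k=(k_1,\ldots,k_n)$ of non-negative integers with $\sum_i k_i=m$ and every $i\in[n]$, $EU^k_\Psi(a_i)=u\big(k_i,\sum_{j<i}k_j\big)$. Then among the vectors $k$ maximizing the egalitarian social welfare $SW^e_\Psi(k)=\min_{a}EU^k_\Psi(a)$ there is one that is non-decreasing, i.e. $k_1\le k_2\le\cdots\le k_n$.
   Context: There are $n$ agents $a_1,\ldots,a_n$ and $m$ items. A preference profile assigns to each agent a strict ranking of the items. A scoring vector is $s=(s_1,\ldots,s_m)$ of non-negative rationals with $s_1\ge\cdots\ge s_m$; an agent's value for her $j$-th preferred item is $s_j$, and utilities are additive. Given $k=(k_1,\ldots,k_n)$ with non-negative integer entries summing to $m$, agent $a_1$ first picks $k_1$ items, then $a_2$ picks $k_2$ of the remaining items, etc., each agent greedily picking her most preferred remaining items. $U^k_P(a)$ is the total score of the items agent $a$ receives under profile $P$, and $EU^k_\Psi(a)=\mathbb{E}_{P\sim\Psi}[U^k_P(a)]$. *)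

theory Defs
  imports "HOL-Probability.Probability"
begin

text \<open>Agents are indexed 0..n-1, items 0..m-1.  A preference profile is a list of n
rankings; a ranking is a list listing every item exactly once, most preferred first.
Ranks are 0-based: the agent's value for the item at position j of her ranking is s j.\<close>

definition is_ranking :: "nat \<Rightarrow> nat list \<Rightarrow> bool" where
  "is_ranking m r \<longleftrightarrow> distinct r \<and> set r = {..<m}"

definition is_profile :: "nat \<Rightarrow> nat \<Rightarrow> nat list list \<Rightarrow> bool" where
  "is_profile n m P \<longleftrightarrow> length P = n \<and> (\<forall>r\<in>set P. is_ranking m r)"

definition is_scoring_vector :: "nat \<Rightarrow> (nat \<Rightarrow> real) \<Rightarrow> bool" where
  "is_scoring_vector m s \<longleftrightarrow> (\<forall>j<m. s j \<in> \<rat> \<and> s j \<ge> 0) \<and> (\<forall>i j. i \<le> j \<longrightarrow> j < m \<longrightarrow> s j \<le> s i)"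

definition is_seq :: "nat \<Rightarrow> nat \<Rightarrow> nat list \<Rightarrow> bool" where
  "is_seq n m k \<longleftrightarrow> length k = n \<and> sum_list k = m"

fun taken :: "nat list list \<Rightarrow> nat list \<Rightarrow> nat \<Rightarrow> nat set" where
  "taken P k 0 = {}"
| "taken P k (Suc i) = taken P k i \<union> set (take (k ! i) (filter (\<lambda>x. x \<notin> taken P k i) (P ! i)))"

definition alloc :: "nat list list \<Rightarrow> nat list \<Rightarrow> nat \<Rightarrow> nat set" where
  "alloc P k i = set (take (k ! i) (filter (\<lambda>x. x \<notin> taken P k i) (P ! i)))"

fun pos :: "nat list \<Rightarrow> nat \<Rightarrow> nat" where
  "pos [] x = 0"
| "pos (y # ys) x = (if y = x then 0 else Suc (pos ys x))"

definition U :: "(nat \<Rightarrow> real) \<Rightarrow> nat list list \<Rightarrow> nat list \<Rightarrow> nat \<Rightarrow> real" where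
  "U s P k i = (\<Sum>x\<in>alloc P k i. s (pos (P ! i) x))"

definition EU :: "(nat \<Rightarrow> real) \<Rightarrow> nat list list pmf \<Rightarrow> nat list \<Rightarrow> nat \<Rightarrow> real" where
  "EU s \<Psi> k i = measure_pmf.expectation \<Psi> (\<lambda>P. U s P k i)"

definition SWe :: "nat \<Rightarrow> (nat \<Rightarrow> real) \<Rightarrow> nat list list pmf \<Rightarrow> nat list \<Rightarrow> real" where
  "SWe n s \<Psi> k = Min ((\<lambda>i. EU s \<Psi> k i) ` {..<n})"

end

theory Submission
  imports Defs
begin

definition sc :: "(nat \<Rightarrow> real) \<Rightarrow> nat list \<Rightarrow> nat list \<Rightarrow> real" where
  "sc s r L = (\<Sum>x\<leftarrow>L. s (pos r x))"

lemma sc_Nil[simp]: "sc s r [] = 0" by (simp add: sc_def)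
lemma sc_Cons: "sc s r (x#L) = s (pos r x) + sc s r L" by (simp add: sc_def)
lemma sc_append: "sc s r (L1 @ L2) = sc s r L1 + sc s r L2" by (simp add: sc_def)

lemma pos_less: "x \<in> set r \<Longrightarrow> pos r x < length r"
  by (induction r) auto

lemma sc_cons_notin: "y \<notin> set L \<Longrightarrow> sc s (y#ys) L = sc (\<lambda>j. s (Suc j)) ys L"
  by (induction L) (auto simp: sc_Cons)

lemma sc_nonneg: "(\<forall>x\<in>set L. 0 \<le> s (pos r x)) \<Longrightarrow> 0 \<le> sc s r L"
  by (induction L) (auto simp: sc_Cons)

lemma sc_take1: "(\<forall>x\<in>set L. s (pos r x) \<le> c) \<Longrightarrow> 0 \<le> c \<Longrightarrow> sc s r (take 1 L) \<le> c"
  by (cases L) (auto simp: sc_Cons)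

lemma sc_filter_mono:
  assumes "distinct r" "A \<subseteq> B"
    "\<forall>i j. i \<le> j \<longrightarrow> j < length r \<longrightarrow> s j \<le> s i" "\<forall>j<length r. 0 \<le> s j"
  shows "sc s r (take b (filter (\<lambda>x. x \<notin> B) r)) \<le> sc s r (take b (filter (\<lambda>x. x \<notin> A) r))"
  using assms
proof (induction r arbitrary: s b)
  case Nil
  then show ?case by simp
next
  case (Cons y ys)
  define s' where "s' = (\<lambda>j. s (Suc j))"
  have mono': "\<forall>i j. i \<le> j \<longrightarrow> j < length ys \<longrightarrow> s' j \<le> s' i"
    using Cons.prems(3) by (auto simp: s'_def)
  have nn': "\<forall>j<length ys. 0 \<le> s' j" using Cons.prems(4) by (auto simp: s'_def)
  have IH: "\<And>c. sc s' ys (take c (filter (\<lambda>x. x \<notin> B) ys)) \<le> sc s' ys (take c (filter (\<lambda>x. x \<notin> A) ys))"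
    using Cons.IH[OF _ Cons.prems(2) mono' nn'] Cons.prems(1) by auto
  have yn: "y \<notin> set ys" using Cons.prems(1) by simp
  have nB: "\<And>c. y \<notin> set (take c (filter (\<lambda>x. x \<notin> B) ys))" using yn by (auto dest: in_set_takeD)
  have nA: "\<And>c. y \<notin> set (take c (filter (\<lambda>x. x \<notin> A) ys))" using yn by (auto dest: in_set_takeD)
  have s0: "0 \<le> s 0" using Cons.prems(4) by auto
  show ?case
  proof (cases "y \<in> A")
    case True
    then have "y \<in> B" using Cons.prems(2) by auto
    then show ?thesis using True IH nA nB by (simp add: sc_cons_notin s'_def)
  next
    case False
    show ?thesis
    proof (cases b)
      case 0
      then show ?thesis by simp
    next
      case (Suc c)
      have rhs: "sc s (y#ys) (take b (filter (\<lambda>x. x \<notin> A) (y#ys))) = s 0 + sc s' ys (take c (filter (\<lambda>x. x \<notin> A) ys))"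
        using False Suc nA by (simp add: sc_Cons sc_cons_notin s'_def)
      show ?thesis
      proof (cases "y \<in> B")
        case False
        have "sc s (y#ys) (take b (filter (\<lambda>x. x \<notin> B) (y#ys))) = s 0 + sc s' ys (take c (filter (\<lambda>x. x \<notin> B) ys))"
          using False Suc nB by (simp add: sc_Cons sc_cons_notin s'_def)
        then show ?thesis using rhs IH[of c] by simp
      next
        case True
        let ?F = "filter (\<lambda>x. x \<notin> B) ys"
        have tk: "take b ?F = take c ?F @ take 1 (drop c ?F)" using Suc take_add[of c 1 ?F] by simp
        have "sc s' ys (take 1 (drop c ?F)) \<le> s 0"
        proof (rule sc_take1[OF _ s0])
          show "\<forall>x\<in>set (drop c ?F). s' (pos ys x) \<le> s 0"
          proof
            fix x assume "x \<in> set (drop c ?F)"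
            then have "x \<in> set ys" by (auto dest: in_set_dropD)
            then have "Suc (pos ys x) < length (y#ys)" using pos_less by auto
            then show "s' (pos ys x) \<le> s 0" using Cons.prems(3) by (auto simp: s'_def)
          qed
        qed
        moreover have lhs: "sc s (y#ys) (take b (filter (\<lambda>x. x \<notin> B) (y#ys))) = sc s' ys (take b ?F)"
          using True nB by (simp add: sc_cons_notin s'_def)
        ultimately show ?thesis using rhs IH[of c] tk by (simp add: sc_append)
      qed
    qed
  qed
qed

lemma sc_take_mono:
  assumes "b \<le> a" and nn: "\<forall>x\<in>set L. 0 \<le> s (pos r x)"
  shows "sc s r (take b L) \<le> sc s r (take a L)"
proof -
  have "take a L = take b L @ take (a-b) (drop b L)" using take_add[of b "a-b" L] \<open>b\<le>a\<close> by simp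
  moreover have "0 \<le> sc s r (take (a-b) (drop b L))" using nn
    by (intro sc_nonneg) (auto dest: in_set_takeD in_set_dropD)
  ultimately show ?thesis by (simp add: sc_append)
qed

lemma sc_take_self: "distinct r \<Longrightarrow> sc s r (take b r) = (\<Sum>j<min b (length r). s j)"
proof (induction r arbitrary: s b)
  case Nil then show ?case by simp
next
  case (Cons y ys)
  show ?case
  proof (cases b)
    case 0 then show ?thesis by simp
  next
    case (Suc c)
    have "y \<notin> set (take c ys)" using Cons.prems by (auto dest: in_set_takeD)
    then have "sc s (y#ys) (take b (y#ys)) = s 0 + sc (\<lambda>j. s (Suc j)) ys (take c ys)"
      using Suc by (simp add: sc_Cons sc_cons_notin)
    also have "\<dots> = s 0 + (\<Sum>j<min c (length ys). s (Suc j))"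
      using Cons.IH[of "\<lambda>j. s (Suc j)" c] Cons.prems by simp
    also have "\<dots> = (\<Sum>j<Suc (min c (length ys)). s j)" by (simp only: sum.lessThan_Suc_shift)
    finally show ?thesis using Suc by simp
  qed
qed

lemma sc_cmp:
  assumes "distinct r" "A \<subseteq> B" "b \<le> a"
    "\<forall>i j. i \<le> j \<longrightarrow> j < length r \<longrightarrow> s j \<le> s i" "\<forall>j<length r. 0 \<le> s j"
  shows "sc s r (take b (filter (\<lambda>x. x \<notin> B) r)) \<le> sc s r (take a (filter (\<lambda>x. x \<notin> A) r))"
proof -
  have "\<forall>x\<in>set (filter (\<lambda>x. x \<notin> A) r). 0 \<le> s (pos r x)" using pos_less assms(5) by auto
  then show ?thesis
    using sc_filter_mono[OF assms(1,2,4,5), of b] sc_take_mono[OF assms(3), of "filter (\<lambda>x. x \<notin> A) r" s r]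
    by linarith
qed

lemma taken_eq: "(\<forall>l<j. k!l = k'!l) \<Longrightarrow> taken P k j = taken P k' j"
  by (induction j) auto

lemma taken_Suc_mono: "taken P k j = taken P k' j \<Longrightarrow> k!j \<le> k'!j \<Longrightarrow> taken P k (Suc j) \<subseteq> taken P k' (Suc j)"
  using set_take_subset_set_take[of "k!j" "k'!j" "filter (\<lambda>x. x \<notin> taken P k' j) (P!j)"] by auto

lemma U_sc: "distinct (P!i) \<Longrightarrow> U s P k i = sc s (P!i) (take (k!i) (filter (\<lambda>x. x \<notin> taken P k i) (P!i)))"
  unfolding U_def alloc_def sc_def by (simp add: sum_list_distinct_conv_sum_set)

lemma prof_facts: "is_profile n m P \<Longrightarrow> i < n \<Longrightarrow> distinct (P!i) \<and> length (P!i) = m"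
proof -
  assume a: "is_profile n m P" "i < n"
  then have "P!i \<in> set P" by (simp add: is_profile_def)
  then have "is_ranking m (P!i)" using a(1) by (auto simp: is_profile_def)
  then show ?thesis unfolding is_ranking_def using distinct_card by fastforce
qed

lemma scoring_facts: "is_scoring_vector m s \<Longrightarrow>
   (\<forall>i j. i \<le> j \<longrightarrow> j < m \<longrightarrow> s j \<le> s i) \<and> (\<forall>j<m. 0 \<le> s j)"
  unfolding is_scoring_vector_def by auto

lemma U_bounds:
  assumes "is_scoring_vector m s" "is_profile n m P" "i < n"
  shows "0 \<le> U s P k i \<and> U s P k i \<le> (\<Sum>j<m. s j)"
proof -
  from prof_facts[OF assms(2,3)] have d: "distinct (P!i)" and l: "length (P!i) = m" by auto
  from scoring_facts[OF assms(1)] have mo: "\<forall>a b. a \<le> b \<longrightarrow> b < length (P!i) \<longrightarrow> s b \<le> s a"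
    and nn: "\<forall>j<length (P!i). 0 \<le> s j" using l by auto
  have "U s P k i \<le> sc s (P!i) (take (k!i) (filter (\<lambda>x. x \<notin> {}) (P!i)))"
    unfolding U_sc[OF d] by (rule sc_filter_mono[OF d _ mo nn]) auto
  also have "\<dots> = (\<Sum>j<min (k!i) m. s j)" using sc_take_self[OF d] l by simp
  also have "\<dots> \<le> (\<Sum>j<m. s j)" using nn l by (intro sum_mono2) auto
  finally have "U s P k i \<le> (\<Sum>j<m. s j)" .
  moreover have "0 \<le> U s P k i" unfolding U_sc[OF d]
    using pos_less nn by (intro sc_nonneg) (auto dest: in_set_takeD)
  ultimately show ?thesis by simp
qed

lemma U_integrable:
  assumes "is_scoring_vector m s" "\<forall>P\<in>set_pmf \<Psi>. is_profile n m P" "i < n"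
  shows "integrable (measure_pmf \<Psi>) (\<lambda>P. U s P k i)"
proof (rule measure_pmf.integrable_const_bound[where B="\<Sum>j<m. s j"])
  show "AE P in measure_pmf \<Psi>. norm (U s P k i) \<le> (\<Sum>j<m. s j)"
    using U_bounds[OF assms(1) _ assms(3)] assms(2) by (intro AE_pmfI) force
qed simp

lemma EU_le:
  assumes "is_scoring_vector m s" "\<forall>P\<in>set_pmf \<Psi>. is_profile n m P" "i < n" "j < n"
    "\<forall>P\<in>set_pmf \<Psi>. U s P k i \<le> U s P k' j"
  shows "EU s \<Psi> k i \<le> EU s \<Psi> k' j"
  unfolding EU_def
  by (rule integral_mono_AE[OF U_integrable[OF assms(1,2,3)] U_integrable[OF assms(1,2,4)]])
     (use assms(5) in \<open>auto intro: AE_pmfI\<close>)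


fun phi :: "nat list \<Rightarrow> nat" where
  "phi [] = 0" | "phi (x#xs) = sum_list xs + phi xs"

lemma phi_append: "phi (xs @ L) = phi xs + length xs * sum_list L + phi L"
  by (induction xs) (auto simp: algebra_simps)

lemma swap_ok:
  assumes n_pos: "n \<ge> 1"
    and scoring: "is_scoring_vector m s"
    and profiles: "\<forall>P\<in>set_pmf \<Psi>. is_profile n m P"
    and u: "\<forall>k. is_seq n m k \<longrightarrow> (\<forall>i<n. EU s \<Psi> k i = u (k ! i) (sum_list (take i k)))"
    and kseq: "is_seq n m (xs @ [a,b] @ ys)" and ab: "b < a"
  shows "is_seq n m (xs @ [b,a] @ ys) \<and> SWe n s \<Psi> (xs @ [a,b] @ ys) \<le> SWe n s \<Psi> (xs @ [b,a] @ ys)"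
proof -
  define k where "k = xs @ [a,b] @ ys"
  define k' where "k' = xs @ [b,a] @ ys"
  define i where "i = length xs"
  have k'seq: "is_seq n m k'" using kseq by (auto simp: is_seq_def k'_def)
  have kseq': "is_seq n m k" using kseq by (simp add: k_def)
  have hn: "n = i + 2 + length ys" using kseq by (simp add: is_seq_def i_def)
  from scoring_facts[OF scoring] have smo: "\<forall>a b. a \<le> b \<longrightarrow> b < m \<longrightarrow> s b \<le> s a"
    and snn: "\<forall>j<m. 0 \<le> s j" by auto
  have minle: "\<And>j. j<n \<Longrightarrow> SWe n s \<Psi> k \<le> EU s \<Psi> k j"
    unfolding SWe_def by (intro Min_le) auto
  have uk: "\<And>j. j < n \<Longrightarrow> EU s \<Psi> k j = u (k!j) (sum_list (take j k))" using u kseq' by blast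
  have uk': "\<And>j. j < n \<Longrightarrow> EU s \<Psi> k' j = u (k'!j) (sum_list (take j k'))" using u k'seq by blast
  have c1: "EU s \<Psi> k (Suc i) \<le> EU s \<Psi> k' (Suc i)"
  proof (rule EU_le[OF scoring profiles])
    show "Suc i < n" using hn by simp
    show "\<forall>P\<in>set_pmf \<Psi>. U s P k (Suc i) \<le> U s P k' (Suc i)"
    proof
      fix P assume P: "P \<in> set_pmf \<Psi>"
      have pf: "distinct (P!Suc i) \<and> length (P!Suc i) = m" using prof_facts[of n m P "Suc i"] P profiles hn by auto
      have "taken P k' i = taken P k i" by (rule taken_eq) (simp add: k_def k'_def i_def nth_append)
      then have T: "taken P k' (Suc i) \<subseteq> taken P k (Suc i)"
        by (rule taken_Suc_mono) (simp add: k_def k'_def i_def nth_append less_imp_le[OF ab])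
      have e1: "k!Suc i = b" "k'!Suc i = a" by (simp_all add: k_def k'_def i_def nth_append)
      show "U s P k (Suc i) \<le> U s P k' (Suc i)"
        unfolding U_sc[OF conjunct1[OF pf]] e1
        by (rule sc_cmp) (use pf T ab smo snn in auto)
    qed
  qed (use hn in simp)
  have c2: "EU s \<Psi> k (Suc i) \<le> EU s \<Psi> k' i"
  proof (cases xs rule: rev_cases)
    case Nil
    then have i0: "i = 0" by (simp add: i_def)
    show ?thesis
    proof (rule EU_le[OF scoring profiles])
      show "Suc i < n" "i < n" using hn by simp_all
      show "\<forall>P\<in>set_pmf \<Psi>. U s P k (Suc i) \<le> U s P k' i"
      proof
        fix P assume P: "P \<in> set_pmf \<Psi>"
        have pf1: "distinct (P!1) \<and> length (P!1) = m" using prof_facts[of n m P 1] P profiles hn i0 by auto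
        have pf0: "distinct (P!0) \<and> length (P!0) = m" using prof_facts[of n m P 0] P profiles hn i0 by auto
        have e1: "k!1 = b" "k'!0 = b" using Nil by (simp_all add: k_def k'_def)
        have mo1: "\<forall>a b. a \<le> b \<longrightarrow> b < length (P!1) \<longrightarrow> s b \<le> s a" "\<forall>j<length (P!1). 0 \<le> s j"
          using pf1 smo snn by auto
        have "U s P k 1 \<le> sc s (P!1) (take b (filter (\<lambda>x. x \<notin> {}) (P!1)))"
          unfolding U_sc[OF conjunct1[OF pf1]] e1
          by (rule sc_filter_mono[OF conjunct1[OF pf1] _ mo1]) auto
        also have "\<dots> = (\<Sum>j<min b m. s j)" using sc_take_self pf1 by simp
        also have "\<dots> = U s P k' 0"
          unfolding U_sc[OF conjunct1[OF pf0]] e1 using sc_take_self pf0 by simp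
        finally show "U s P k (Suc i) \<le> U s P k' i" using i0 by simp
      qed
    qed
  next
    case (snoc xs0 c)
    define B where "B = xs0 @ [c+a, b, 0] @ ys"
    have Bseq: "is_seq n m B" using kseq snoc by (auto simp: is_seq_def B_def)
    have iS: "i = Suc (length xs0)" using snoc by (simp add: i_def)
    have "EU s \<Psi> k (Suc i) = EU s \<Psi> B i"
    proof -
      have "EU s \<Psi> B i = u (B!i) (sum_list (take i B))" using u Bseq hn by auto
      moreover have "EU s \<Psi> k (Suc i) = u (k!Suc i) (sum_list (take (Suc i) k))" using uk hn by simp
      moreover have "B!i = k!Suc i" "sum_list (take i B) = sum_list (take (Suc i) k)"
        using iS snoc by (simp_all add: B_def k_def nth_append)
      ultimately show ?thesis by simp
    qed
    also have "EU s \<Psi> B i \<le> EU s \<Psi> k' i"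
    proof (rule EU_le[OF scoring profiles])
      show "i < n" using hn by simp
      show "\<forall>P\<in>set_pmf \<Psi>. U s P B i \<le> U s P k' i"
      proof
        fix P assume P: "P \<in> set_pmf \<Psi>"
        have pf: "distinct (P!i) \<and> length (P!i) = m" using prof_facts[of n m P i] P profiles hn by auto
        have "taken P k' (length xs0) = taken P B (length xs0)"
          by (rule taken_eq) (simp add: B_def k'_def snoc nth_append)
        then have T: "taken P k' (Suc (length xs0)) \<subseteq> taken P B (Suc (length xs0))"
          by (rule taken_Suc_mono) (simp add: B_def k'_def snoc nth_append)
        have e1: "B!i = b" "k'!i = b" using iS snoc by (simp_all add: B_def k'_def nth_append)
        show "U s P B i \<le> U s P k' i"
          unfolding U_sc[OF conjunct1[OF pf]] e1
          by (rule sc_cmp) (use pf T iS smo snn in auto)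
      qed
    qed (use hn in simp)
    finally show ?thesis .
  qed
  have all: "\<forall>j<n. SWe n s \<Psi> k \<le> EU s \<Psi> k' j"
  proof (intro allI impI)
    fix j assume j: "j < n"
    consider "j < i" | "j = i" | "j = Suc i" | t where "j = Suc (Suc (i + t))"
      by (metis less_Suc_eq not_less_eq add_Suc_right less_imp_Suc_add linorder_neqE_nat)
    then show "SWe n s \<Psi> k \<le> EU s \<Psi> k' j"
    proof cases
      case 1
      have "EU s \<Psi> k' j = EU s \<Psi> k j" using uk uk' j 1
        by (simp add: k_def k'_def i_def nth_append)
      then show ?thesis using minle j by simp
    next
      case 2
      then show ?thesis using c2 minle[of "Suc i"] hn by simp
    next
      case 3
      then show ?thesis using c1 minle[of "Suc i"] hn by simp
    next
      case 4
      have "EU s \<Psi> k' j = EU s \<Psi> k j" using uk uk' j 4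
        by (simp add: k_def k'_def i_def nth_append algebra_simps)
      then show ?thesis using minle j by simp
    qed
  qed
  have "SWe n s \<Psi> k \<le> SWe n s \<Psi> k'"
    unfolding SWe_def[of n s \<Psi> k'] using all n_pos
    by (subst Min_ge_iff) (auto simp: lessThan_empty_iff)
  then show ?thesis using k'seq by (simp add: k_def k'_def)
qed

theorem proposition1:
  fixes n m :: nat and s :: "nat \<Rightarrow> real" and \<Psi> :: "nat list list pmf"
  assumes n_pos: "n \<ge> 1"
    and scoring: "is_scoring_vector m s"
    and profiles: "\<forall>P\<in>set_pmf \<Psi>. is_profile n m P"
    and u: "\<exists>u :: nat \<Rightarrow> nat \<Rightarrow> real. \<forall>k. is_seq n m k \<longrightarrow>
              (\<forall>i<n. EU s \<Psi> k i = u (k ! i) (sum_list (take i k)))"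
  shows "\<exists>k. is_seq n m k \<and> (\<forall>k'. is_seq n m k' \<longrightarrow> SWe n s \<Psi> k' \<le> SWe n s \<Psi> k)
             \<and> sorted k"
proof -
  obtain u where u: "\<forall>k. is_seq n m k \<longrightarrow> (\<forall>i<n. EU s \<Psi> k i = u (k ! i) (sum_list (take i k)))"
    using assms(4) by blast
  define S where "S = {k. is_seq n m k}"
  have finS: "finite S"
  proof -
    have "S \<subseteq> {xs. set xs \<subseteq> {..m} \<and> length xs = n}"
      by (auto simp: S_def is_seq_def intro: member_le_sum_list)
    then show ?thesis using finite_lists_length_eq[of "{..m}" n] finite_subset by blast
  qed
  have neS: "m # replicate (n-1) 0 \<in> S" using n_pos by (auto simp: S_def is_seq_def)
  define M where "M = {k\<in>S. \<forall>k'\<in>S. SWe n s \<Psi> k' \<le> SWe n s \<Psi> k}"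
  have "Max (SWe n s \<Psi> ` S) \<in> SWe n s \<Psi> ` S" using finS neS by (intro Max_in) auto
  then obtain k0 where k0: "k0 \<in> S" "SWe n s \<Psi> k0 = Max (SWe n s \<Psi> ` S)" by auto
  have "k0 \<in> M" using k0 finS by (auto simp: M_def)
  have finM: "finite M" using finS by (auto simp: M_def)
  have "Max (phi ` M) \<in> phi ` M" using finM \<open>k0 \<in> M\<close> by (intro Max_in) auto
  then obtain k where kM: "k \<in> M" and kmax: "phi k = Max (phi ` M)" by auto
  have kmax': "\<And>k''. k'' \<in> M \<Longrightarrow> phi k'' \<le> phi k" using kmax finM by simp
  have "sorted k"
  proof (rule ccontr)
    assume "\<not> sorted k"
    then obtain i where i: "Suc i < length k" "k!Suc i < k!i"
      unfolding sorted_iff_nth_Suc by (auto simp: not_le)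
    define xs where "xs = take i k"
    define ys where "ys = drop (Suc (Suc i)) k"
    have kdec: "k = xs @ [k!i, k!Suc i] @ ys"
    proof -
      have "drop i k = k!i # k!Suc i # ys" using i(1)
        by (simp add: ys_def Cons_nth_drop_Suc)
      then show ?thesis using append_take_drop_id[of i k] by (simp add: xs_def)
    qed
    have kS: "is_seq n m (xs @ [k!i, k!Suc i] @ ys)" using kM kdec by (simp add: M_def S_def)
    from swap_ok[OF n_pos scoring profiles u kS i(2)]
    have sw: "is_seq n m (xs @ [k!Suc i, k!i] @ ys)"
      "SWe n s \<Psi> k \<le> SWe n s \<Psi> (xs @ [k!Suc i, k!i] @ ys)" using kdec by auto
    have "xs @ [k!Suc i, k!i] @ ys \<in> M"
      using sw kM by (force simp: M_def S_def)
    then have "phi (xs @ [k!Suc i, k!i] @ ys) \<le> phi k" by (rule kmax')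
    moreover have "phi (xs @ [k!Suc i, k!i] @ ys) > phi (xs @ [k!i, k!Suc i] @ ys)"
      using i(2) by (simp add: phi_append algebra_simps)
    ultimately show False using kdec by simp
  qed
  then show ?thesis using kM by (auto simp: M_def S_def)
qed

end
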